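(* Let $n\ge2$, let $X\subseteq\mathbb{N}$ be finite and let $P:[X]^2\to n$ be a colouring. Then: (1) for every $m\in\mathbb{N}$, $|\{x\in X:|\sigma_x|\le m\}|\le n^m$; (2) for every $x\in X\setminus\{\min X\}$ and every $c\in\mathrm{col}(\sigma_x)$, $\min\mathrm{ho}(\sigma_x,c)\le\sigma_x^-(|\sigma_x^-|-1)$ (the last entry of $\sigma_x^-$).
   Context: Pairs in $[X]^2$ are $(x,y)$ with $x<y$. For $x\in X$, the hereditarily minimal prehomogeneous sequence $\sigma_x$ (a finite increasing sequence of elements of $X$) is defined by $\sigma_x(0)=\min X$ and $\sigma_x(i+1)=\min\{y\in X: y>\sigma_x(i)\text{ and }P(\sigma_x(j),x)=P(\sigma_x(j),y)\text{ for all }j\le i\}$, the construction stopping at the first $i$ with $\sigma_x(i)=x$ (so $x$ is the last entry of $\sigma_x$). For $c<n$, $\mathrm{ho}(\sigma_x,c)=\{\sigma_x(i): i<|\sigma_x|-1,\ P(\sigma_x(i),x)=c\}$, and $\mathrm{col}(\sigma_x)=\{c<n:\mathrm{ho}(\sigma_x,c)\ne\emptyset\}$. Every proper nonempty initial segment of $\sigma_x$ equals $\sigma_y$ for some $y<x$ in $X$. For $x\in X\setminus\{\min X\}$, $\sigma_x^-$ denotes the longest proper initial segment $\sigma_y\subsetneq\sigma_x$ such that $\mathrm{col}(\sigma_y)\subsetneq\mathrm{col}(\sigma_x)$. *)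

theory Defs
  imports Main
begin

text \<open>Colourings P of pairs (a,b) with a<b are curried functions P a b;
  the sequence sigma_x is a list. The auxiliary function builds it step by
  step with fuel; fuel card X suffices since the entries strictly increase in X.\<close>

fun hmp_aux :: "nat set \<Rightarrow> (nat \<Rightarrow> nat \<Rightarrow> nat) \<Rightarrow> nat \<Rightarrow> nat \<Rightarrow> nat list \<Rightarrow> nat list" where
  "hmp_aux X P x 0 s = s"
| "hmp_aux X P x (Suc k) s =
     (if last s = x then s
      else hmp_aux X P x k
        (s @ [LEAST y. y \<in> X \<and> y > last s \<and> (\<forall>j<length s. P (s ! j) x = P (s ! j) y)]))"

definition hmp :: "nat set \<Rightarrow> (nat \<Rightarrow> nat \<Rightarrow> nat) \<Rightarrow> nat \<Rightarrow> nat list" where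
  "hmp X P x = hmp_aux X P x (card X) [Min X]"

definition ho :: "(nat \<Rightarrow> nat \<Rightarrow> nat) \<Rightarrow> nat list \<Rightarrow> nat \<Rightarrow> nat set" where
  "ho P s c = {s ! i | i. i < length s - 1 \<and> P (s ! i) (last s) = c}"

definition col :: "nat \<Rightarrow> (nat \<Rightarrow> nat \<Rightarrow> nat) \<Rightarrow> nat list \<Rightarrow> nat set" where
  "col n P s = {c. c < n \<and> ho P s c \<noteq> {}}"

definition hmp_minus :: "nat \<Rightarrow> nat set \<Rightarrow> (nat \<Rightarrow> nat \<Rightarrow> nat) \<Rightarrow> nat \<Rightarrow> nat list" where
  "hmp_minus n X P x = take (GREATEST k. 1 \<le> k \<and> k < length (hmp X P x) \<and>
       (\<exists>y\<in>X. y < x \<and> hmp X P y = take k (hmp X P x) \<and>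
          col n P (hmp X P y) \<subset> col n P (hmp X P x))) (hmp X P x)"

end

theory Submission
  imports Defs
begin

definition good :: "nat set \<Rightarrow> (nat \<Rightarrow> nat \<Rightarrow> nat) \<Rightarrow> nat \<Rightarrow> nat list \<Rightarrow> bool" where
  "good X P x s \<longleftrightarrow> s \<noteq> [] \<and> s ! 0 = Min X \<and> last s = x \<and> sorted_wrt (<) s \<and> set s \<subseteq> X \<and>
     (\<forall>i. Suc i < length s \<longrightarrow>
        s ! Suc i = (LEAST y. y \<in> X \<and> y > s ! i \<and> (\<forall>j<Suc i. P (s ! j) x = P (s ! j) y)))"

lemma sorted_le_last: "sorted_wrt (<) (s::nat list) \<Longrightarrow> y \<in> set s \<Longrightarrow> y \<le> last s"
proof -
  assume a: "sorted_wrt (<) s" "y \<in> set s"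
  then obtain i where i: "i < length s" "s ! i = y" by (auto simp: in_set_conv_nth)
  have ne0: "s \<noteq> []" using i by auto
  have l: "last s = s ! (length s - 1)" using ne0 by (simp add: last_conv_nth)
  show ?thesis
  proof (cases "i = length s - 1")
    case True then show ?thesis using i l by simp
  next
    case False
    then have "s ! i < s ! (length s - 1)" using i sorted_wrt_nth_less[OF a(1), of i "length s - 1"] by auto
    then show ?thesis using i l by simp
  qed
qed

lemma aux:
  assumes "finite X" "x \<in> X"
  shows "s \<noteq> [] \<Longrightarrow> s ! 0 = Min X \<Longrightarrow> sorted_wrt (<) s \<Longrightarrow> set s \<subseteq> X \<Longrightarrow> last s \<le> x \<Longrightarrow>
    (\<forall>i. Suc i < length s \<longrightarrow>
        s ! Suc i = (LEAST y. y \<in> X \<and> y > s ! i \<and> (\<forall>j<Suc i. P (s ! j) x = P (s ! j) y))) \<Longrightarrow>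
    card {y\<in>X. last s < y \<and> y \<le> x} \<le> k \<Longrightarrow> good X P x (hmp_aux X P x k s)"
proof (induction k arbitrary: s)
  case 0
  have "last s = x"
  proof (rule ccontr)
    assume "last s \<noteq> x"
    then have "x \<in> {y\<in>X. last s < y \<and> y \<le> x}" using 0 assms by auto
    moreover have "finite {y\<in>X. last s < y \<and> y \<le> x}" using assms by auto
    ultimately show False using 0 by (metis card_0_eq empty_iff le_0_eq)
  qed
  then show ?case using 0 by (simp add: good_def)
next
  case (Suc k)
  show ?case
  proof (cases "last s = x")
    case True then show ?thesis using Suc.prems by (simp add: good_def)
  next
    case False
    define Q where "Q = (\<lambda>y. y \<in> X \<and> y > last s \<and> (\<forall>j<length s. P (s ! j) x = P (s ! j) y))"
    define a where "a = (LEAST y. Q y)"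
    have Qx: "Q x" using False Suc.prems assms by (auto simp: Q_def)
    have Qa: "Q a" unfolding a_def using Qx by (rule LeastI)
    have ax: "a \<le> x" unfolding a_def using Qx by (rule Least_le)
    have eq: "hmp_aux X P x (Suc k) s = hmp_aux X P x k (s @ [a])"
      using False by (simp add: a_def Q_def)
    have ls: "last s = s ! (length s - 1)" using Suc.prems by (simp add: last_conv_nth)
    have G: "\<forall>i. Suc i < length (s @ [a]) \<longrightarrow>
        (s @ [a]) ! Suc i = (LEAST y. y \<in> X \<and> y > (s @ [a]) ! i \<and> (\<forall>j<Suc i. P ((s @ [a]) ! j) x = P ((s @ [a]) ! j) y))"
    proof (intro allI impI)
      fix i assume i: "Suc i < length (s @ [a])"
      show "(s @ [a]) ! Suc i = (LEAST y. y \<in> X \<and> y > (s @ [a]) ! i \<and> (\<forall>j<Suc i. P ((s @ [a]) ! j) x = P ((s @ [a]) ! j) y))"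
      proof (cases "Suc i < length s")
        case True
        have "(\<lambda>y. y \<in> X \<and> y > (s @ [a]) ! i \<and> (\<forall>j<Suc i. P ((s @ [a]) ! j) x = P ((s @ [a]) ! j) y))
            = (\<lambda>y. y \<in> X \<and> y > s ! i \<and> (\<forall>j<Suc i. P (s ! j) x = P (s ! j) y))"
          using True by (auto simp: nth_append)
        then show ?thesis using True Suc.prems by (simp add: nth_append)
      next
        case False
        then have si: "Suc i = length s" using i by simp
        then have si2: "i = length s - 1" by simp
        have "(\<lambda>y. y \<in> X \<and> y > (s @ [a]) ! i \<and> (\<forall>j<Suc i. P ((s @ [a]) ! j) x = P ((s @ [a]) ! j) y))
            = Q"
          using si ls si2 by (auto simp: nth_append Q_def)
        then show ?thesis using si by (simp add: a_def)
      qed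
    qed
    have sub: "{y\<in>X. a < y \<and> y \<le> x} \<subset> {y\<in>X. last s < y \<and> y \<le> x}"
      using Qa ax by (auto simp: Q_def)
    have "card {y\<in>X. a < y \<and> y \<le> x} < card {y\<in>X. last s < y \<and> y \<le> x}"
      using sub assms by (intro psubset_card_mono) auto
    then have ck: "card {y\<in>X. last (s @ [a]) < y \<and> y \<le> x} \<le> k" using Suc.prems by simp
    have la: "last s < a" using Qa by (simp add: Q_def)
    have "\<forall>y\<in>set s. y < a" using sorted_le_last[OF Suc.prems(3)] la by force
    then have sw: "sorted_wrt (<) (s @ [a])"
      using Suc.prems(3) by (simp add: sorted_wrt_append)
    have "good X P x (hmp_aux X P x k (s @ [a]))"
    proof (rule Suc.IH)
      show "(s @ [a]) ! 0 = Min X" using Suc.prems(1,2) by (simp add: nth_append)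
      show "set (s @ [a]) \<subseteq> X" using Suc.prems(4) Qa by (simp add: Q_def)
      show "s @ [a] \<noteq> []" by simp
      show "sorted_wrt (<) (s @ [a])" by (fact sw)
      show "last (s @ [a]) \<le> x" using ax by simp
    qed (fact G | fact ck)+
    then show ?thesis by (simp only: eq)
  qed
qed

lemma good_hmp: "finite X \<Longrightarrow> x \<in> X \<Longrightarrow> good X P x (hmp X P x)"
  unfolding hmp_def
proof (rule aux)
  assume a: "finite X" "x \<in> X"
  show "card {y \<in> X. last [Min X] < y \<and> y \<le> x} \<le> card X"
    using a by (intro card_mono) auto
qed (auto intro: Min_in Min_le)

lemma good_D:
  assumes "good X P x s"
  shows "s \<noteq> []" "s ! 0 = Min X" "last s = x" "sorted_wrt (<) s" "set s \<subseteq> X"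
  using assms unfolding good_def by auto

lemma good_G:
  assumes "good X P x s" "Suc i < length s"
  shows "s ! Suc i = (LEAST y. y \<in> X \<and> y > s ! i \<and> (\<forall>j<Suc i. P (s ! j) x = P (s ! j) y))"
  using assms unfolding good_def by blast

lemma det:
  assumes "good X P x s" "good X P x' s'"
    and "\<forall>j. Suc j < length s \<longrightarrow> Suc j < length s' \<longrightarrow> s ! j = s' ! j \<longrightarrow> P (s ! j) x = P (s' ! j) x'"
  shows "i < length s \<Longrightarrow> i < length s' \<Longrightarrow> s ! i = s' ! i"
proof (induction i rule: less_induct)
  case (less i)
  show ?case
  proof (cases i)
    case 0 then show ?thesis using assms by (simp add: good_def)
  next
    case (Suc i')
    have h: "\<And>j. j < Suc i' \<Longrightarrow> s ! j = s' ! j" using less Suc by auto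
    have "(\<lambda>y. y \<in> X \<and> y > s ! i' \<and> (\<forall>j<Suc i'. P (s ! j) x = P (s ! j) y))
        = (\<lambda>y. y \<in> X \<and> y > s' ! i' \<and> (\<forall>j<Suc i'. P (s' ! j) x' = P (s' ! j) y))"
    proof -
      have "\<And>j. j < Suc i' \<Longrightarrow> P (s ! j) x = P (s' ! j) x'"
        using assms(3) h less.prems Suc by auto
      then show ?thesis using h by auto
    qed
    then have "(LEAST y. y \<in> X \<and> y > s ! i' \<and> (\<forall>j<Suc i'. P (s ! j) x = P (s ! j) y))
        = (LEAST y. y \<in> X \<and> y > s' ! i' \<and> (\<forall>j<Suc i'. P (s' ! j) x' = P (s' ! j) y))"
      by (rule arg_cong)
    moreover have "s ! Suc i' = (LEAST y. y \<in> X \<and> y > s ! i' \<and> (\<forall>j<Suc i'. P (s ! j) x = P (s ! j) y))"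
      using good_G[OF assms(1)] less.prems Suc by blast
    moreover have "s' ! Suc i' = (LEAST y. y \<in> X \<and> y > s' ! i' \<and> (\<forall>j<Suc i'. P (s' ! j) x' = P (s' ! j) y))"
      using good_G[OF assms(2)] less.prems Suc by blast
    ultimately show ?thesis using Suc by simp
  qed
qed

lemma good_unique:
  assumes "good X P x s" "good X P x s'" shows "s = s'"
proof -
  have e: "\<And>i. i < length s \<Longrightarrow> i < length s' \<Longrightarrow> s ! i = s' ! i"
    by (rule det[OF assms]) auto
  have ne: "s \<noteq> []" "s' \<noteq> []" using assms by (auto simp: good_def)
  have "length s = length s'"
  proof (rule ccontr)
    assume "length s \<noteq> length s'"
    then consider "length s < length s'" | "length s' < length s" by linarith
    then show False
    proof cases
      case 1
      have sw: "sorted_wrt (<) s'" using assms(2) by (simp add: good_def)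
      have "s' ! (length s - 1) < s' ! (length s' - 1)"
      proof -
        have "length s - 1 < length s' - 1" using 1 ne by (cases s) auto
        then show ?thesis using 1 ne sorted_wrt_nth_less[OF sw, of "length s - 1" "length s' - 1"] by auto
      qed
      moreover have "s ! (length s - 1) = s' ! (length s - 1)" using e 1 ne by simp
      ultimately show False using assms ne by (simp add: good_def last_conv_nth)
    next
      case 2
      have sw: "sorted_wrt (<) s" using assms(1) by (simp add: good_def)
      have "s ! (length s' - 1) < s ! (length s - 1)"
      proof -
        have "length s' - 1 < length s - 1" using 2 ne by (cases s') auto
        then show ?thesis using 2 ne sorted_wrt_nth_less[OF sw, of "length s' - 1" "length s - 1"] by auto
      qed
      moreover have "s ! (length s' - 1) = s' ! (length s' - 1)" using e 2 ne by simp
      ultimately show False using assms ne by (simp add: good_def last_conv_nth)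
    qed
  qed
  then show ?thesis using e by (intro nth_equalityI) auto
qed

lemma colour_agree:
  assumes "good X P x s" "i0 < length s" "i < i0"
  shows "P (s ! i) (s ! i0) = P (s ! i) x"
proof -
  obtain i' where i': "i0 = Suc i'" using assms by (cases i0) auto
  define Q where "Q = (\<lambda>y. y \<in> X \<and> y > s ! i' \<and> (\<forall>j<Suc i'. P (s ! j) x = P (s ! j) y))"
  have ne: "s \<noteq> []" using good_D[OF assms(1)] by simp
  have sw: "sorted_wrt (<) s" using good_D[OF assms(1)] by simp
  have "s ! i' < s ! (length s - 1)"
    using sorted_wrt_nth_less[OF sw, of i' "length s - 1"] assms i' by auto
  moreover have "last s = x" "set s \<subseteq> X" using good_D[OF assms(1)] by auto
  moreover have "last s \<in> set s" using ne by simp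
  ultimately have "Q x" using ne by (auto simp: Q_def last_conv_nth)
  then have "Q (LEAST y. Q y)" by (rule LeastI)
  moreover have "s ! i0 = (LEAST y. Q y)" unfolding Q_def i' by (rule good_G[OF assms(1)]) (use assms i' in simp)
  ultimately have "Q (s ! i0)" by simp
  then show ?thesis using assms(3) i' unfolding Q_def by auto
qed

lemma good_take:
  assumes "good X P x s" "i0 < length s"
  shows "good X P (s ! i0) (take (Suc i0) s)"
proof -
  have G: "\<forall>i. Suc i < length (take (Suc i0) s) \<longrightarrow>
        take (Suc i0) s ! Suc i = (LEAST y. y \<in> X \<and> y > take (Suc i0) s ! i \<and>
           (\<forall>j<Suc i. P (take (Suc i0) s ! j) (s ! i0) = P (take (Suc i0) s ! j) y))"
  proof (intro allI impI)
    fix i assume i: "Suc i < length (take (Suc i0) s)"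
    then have ii: "Suc i \<le> i0" "Suc i < length s" by auto
    have "(\<lambda>y. y \<in> X \<and> y > take (Suc i0) s ! i \<and>
           (\<forall>j<Suc i. P (take (Suc i0) s ! j) (s ! i0) = P (take (Suc i0) s ! j) y))
        = (\<lambda>y. y \<in> X \<and> y > s ! i \<and> (\<forall>j<Suc i. P (s ! j) x = P (s ! j) y))"
      using ii colour_agree[OF assms] by auto
    then show "take (Suc i0) s ! Suc i = (LEAST y. y \<in> X \<and> y > take (Suc i0) s ! i \<and>
           (\<forall>j<Suc i. P (take (Suc i0) s ! j) (s ! i0) = P (take (Suc i0) s ! j) y))"
      using good_G[OF assms(1) ii(2)] ii by simp
  qed
  have lt: "length (take (Suc i0) s) = Suc i0" using assms(2) by simp
  have l: "last (take (Suc i0) s) = s ! i0"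
    by (subst last_conv_nth) (use lt in auto)
  have s1: "set (take (Suc i0) s) \<subseteq> X" using good_D(5)[OF assms(1)]
    by (meson order_trans set_take_subset)
  have ne: "take (Suc i0) s \<noteq> []" "take (Suc i0) s ! 0 = Min X" using good_D[OF assms(1)] by auto
  have sw: "sorted_wrt (<) (take (Suc i0) s)" using good_D(4)[OF assms(1)] by simp
  show ?thesis unfolding good_def using G l s1 ne sw by blast
qed

lemma geom: "2 \<le> (n::nat) \<Longrightarrow> (\<Sum>k<m. n ^ k) \<le> n ^ m"
proof (induction m)
  case (Suc m)
  have "(\<Sum>k<Suc m. n ^ k) \<le> n ^ m + n ^ m" using Suc by simp
  also have "\<dots> \<le> n * n ^ m" using Suc.prems by (metis mult_2 mult_le_mono1)
  finally show ?case by simp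
qed simp

theorem lemma2p8:
  fixes n :: nat and X :: "nat set" and P :: "nat \<Rightarrow> nat \<Rightarrow> nat"
  assumes "n \<ge> 2"
    and "finite X"
    and "\<forall>a\<in>X. \<forall>b\<in>X. a < b \<longrightarrow> P a b < n"
  shows "(\<forall>m::nat. card {x \<in> X. length (hmp X P x) \<le> m} \<le> n ^ m)
    \<and> (\<forall>x \<in> X - {Min X}. \<forall>c \<in> col n P (hmp X P x).
          Min (ho P (hmp X P x) c) \<le> last (hmp_minus n X P x))"
proof -
  have part1: "card {x \<in> X. length (hmp X P x) \<le> m} \<le> n ^ m" for m
  proof (cases m)
    case 0
    have "{x \<in> X. length (hmp X P x) \<le> m} = {}"
    proof -
      have "hmp X P x \<noteq> []" if "x \<in> X" for x
        using good_D(1)[OF good_hmp[OF assms(2) that, of P]] .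
      then show ?thesis using 0 by auto
    qed
    then show ?thesis by (metis card.empty zero_le)
  next
    case (Suc m')
    define S where "S = {x \<in> X. length (hmp X P x) \<le> m}"
    define cl where "cl = (\<lambda>x. map (\<lambda>i. P (hmp X P x ! i) x) [0..<length (hmp X P x) - 1])"
    have len1: "x \<in> X \<Longrightarrow> length (hmp X P x) \<ge> 1" for x
      using good_D(1)[OF good_hmp[OF assms(2), of x P]] by (auto simp: Suc_le_eq)
    have inj: "inj_on cl S"
    proof (rule inj_onI)
      fix x y assume xy: "x \<in> S" "y \<in> S" "cl x = cl y"
      have gx: "good X P x (hmp X P x)" and gy: "good X P y (hmp X P y)"
        using xy good_hmp[OF assms(2)] by (auto simp: S_def)
      have "length (hmp X P x) - 1 = length (hmp X P y) - 1"
        using arg_cong[OF xy(3), of length] by (simp add: cl_def)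
      then have leq: "length (hmp X P x) = length (hmp X P y)"
      proof -
        have "1 \<le> length (hmp X P x)" "1 \<le> length (hmp X P y)" using len1 xy by (auto simp: S_def)
        then show "length (hmp X P x) = length (hmp X P y)" using \<open>length (hmp X P x) - 1 = length (hmp X P y) - 1\<close> by linarith
      qed
      have col: "P (hmp X P x ! j) x = P (hmp X P y ! j) y" if "Suc j < length (hmp X P x)" for j
      proof -
        have "cl x ! j = cl y ! j" using xy by simp
        then show ?thesis using that leq by (simp add: cl_def)
      qed
      have H: "\<forall>j. Suc j < length (hmp X P x) \<longrightarrow> Suc j < length (hmp X P y) \<longrightarrow>
          hmp X P x ! j = hmp X P y ! j \<longrightarrow> P (hmp X P x ! j) x = P (hmp X P y ! j) y"
        using col by blast
      have eqi: "\<And>i. i < length (hmp X P x) \<Longrightarrow> hmp X P x ! i = hmp X P y ! i"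
        using det[OF gx gy H] leq by simp
      have "hmp X P x = hmp X P y" by (rule nth_equalityI[OF leq eqi])
      then show "x = y" by (metis good_D(3)[OF gx] good_D(3)[OF gy])
    qed
    have img: "cl ` S \<subseteq> {l. set l \<subseteq> {..<n} \<and> length l \<le> m'}"
    proof
      fix l assume "l \<in> cl ` S"
      then obtain x where x: "x \<in> S" "l = cl x" by auto
      have gx: "good X P x (hmp X P x)" using x good_hmp[OF assms(2)] by (auto simp: S_def)
      have sw: "sorted_wrt (<) (hmp X P x)" and sx: "set (hmp X P x) \<subseteq> X"
        and ne: "hmp X P x \<noteq> []" and lx: "last (hmp X P x) = x"
        using good_D[OF gx] by auto
      have "P (hmp X P x ! i) x < n" if i: "i < length (hmp X P x) - 1" for i
      proof -
        have "hmp X P x ! i < hmp X P x ! (length (hmp X P x) - 1)"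
          using sorted_wrt_nth_less[OF sw, of i "length (hmp X P x) - 1"] i by auto
        then have "hmp X P x ! i < x" using lx ne by (simp add: last_conv_nth)
        moreover have "hmp X P x ! i \<in> X" using sx i by auto
        ultimately show ?thesis using assms(3) x by (auto simp: S_def)
      qed
      then show "l \<in> {l. set l \<subseteq> {..<n} \<and> length l \<le> m'}"
        using x Suc by (auto simp: cl_def S_def)
    qed
    have "card S = card (cl ` S)" using inj by (simp add: card_image)
    also have "\<dots> \<le> card {l. set l \<subseteq> {..<n} \<and> length l \<le> m'}"
      using img by (intro card_mono) (auto intro: finite_lists_length_le)
    also have "\<dots> = (\<Sum>i\<le>m'. n ^ i)" by (simp add: card_lists_length_le)
    also have "\<dots> = (\<Sum>i<m. n ^ i)" using Suc by (simp add: lessThan_Suc_atMost)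
    also have "\<dots> \<le> n ^ m" using geom assms(1) by blast
    finally show ?thesis by (simp add: S_def)
  qed
  have part2: "Min (ho P (hmp X P x) c) \<le> last (hmp_minus n X P x)"
    if x: "x \<in> X" "x \<noteq> Min X" and c: "c \<in> col n P (hmp X P x)" for x c
  proof -
    define \<sigma> where "\<sigma> = hmp X P x"
    define L where "L = length \<sigma>"
    have Xne: "X \<noteq> {}" using x by auto
    have g: "good X P x \<sigma>" using good_hmp[OF assms(2) x(1)] by (simp add: \<sigma>_def)
    have sw: "sorted_wrt (<) \<sigma>" and sx: "set \<sigma> \<subseteq> X" and ne: "\<sigma> \<noteq> []"
      and lx: "last \<sigma> = x" and h0: "\<sigma> ! 0 = Min X"
      using good_D[OF g] by auto
    have lxL: "\<sigma> ! (L - 1) = x" using lx ne by (simp add: last_conv_nth L_def)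
    have L2: "L \<ge> 2"
    proof (rule ccontr)
      assume "\<not> L \<ge> 2"
      then have "L - 1 = 0" by simp
      then show False using lxL h0 x by simp
    qed
    have mx: "Min X < x" using x assms(2) Min_le by (metis le_neq_implies_less)
    have gmin: "good X P (Min X) [Min X]" using Xne assms(2) by (simp add: good_def)
    have hmin: "hmp X P (Min X) = [Min X]"
      using good_unique[OF good_hmp[OF assms(2) Min_in[OF assms(2) Xne]] gmin] .
    have t1: "take 1 \<sigma> = [Min X]" using ne h0 by (cases \<sigma>) auto
    have colmin: "col n P [Min X] = {}" by (simp add: col_def ho_def)
    have c0: "P (\<sigma> ! 0) x \<in> col n P \<sigma>"
    proof -
      have "P (\<sigma> ! 0) x < n" using assms(3) h0 mx x Min_in[OF assms(2) Xne] by auto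
      moreover have "\<sigma> ! 0 \<in> ho P \<sigma> (P (\<sigma> ! 0) x)"
        unfolding ho_def using L2 lx by (auto simp: L_def)
      ultimately show ?thesis by (auto simp: col_def)
    qed
    define Q where "Q = (\<lambda>k. 1 \<le> k \<and> k < length (hmp X P x) \<and>
       (\<exists>y\<in>X. y < x \<and> hmp X P y = take k (hmp X P x) \<and>
          col n P (hmp X P y) \<subset> col n P (hmp X P x)))"
    have Q1: "Q 1" unfolding Q_def
      using L2 mx Min_in[OF assms(2) Xne] hmin t1 colmin c0
      by (auto simp: \<sigma>_def L_def intro!: bexI[of _ "Min X"])
    have Qb: "\<And>k. Q k \<Longrightarrow> k \<le> L" by (auto simp: Q_def L_def \<sigma>_def)
    define K where "K = (GREATEST k. Q k)"
    have QK: "Q K" unfolding K_def by (rule GreatestI_nat[of Q 1 L, OF Q1 Qb])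
    have Kmax: "\<And>k. Q k \<Longrightarrow> k \<le> K" unfolding K_def by (rule Greatest_le_nat[of Q _ L, OF _ Qb])
    have hm: "hmp_minus n X P x = take K \<sigma>"
      unfolding hmp_minus_def K_def Q_def \<sigma>_def by simp
    have K1: "1 \<le> K" "K < L" using QK by (auto simp: Q_def L_def \<sigma>_def)
    have lastm: "last (hmp_minus n X P x) = \<sigma> ! (K - 1)"
    proof -
      have lk: "length (take K \<sigma>) = K" using K1 by (simp add: L_def)
      show ?thesis unfolding hm by (subst last_conv_nth) (use lk K1 in auto)
    qed
    have hoeq: "ho P \<sigma> c = (\<lambda>i. \<sigma> ! i) ` {i. i < L - 1 \<and> P (\<sigma> ! i) x = c}"
      unfolding ho_def using lx by (auto simp: L_def)
    have hone: "ho P \<sigma> c \<noteq> {}" and cn: "c < n" using c by (auto simp: col_def \<sigma>_def)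
    have hofin: "finite (ho P \<sigma> c)" using hoeq by simp
    obtain i1 where i1: "i1 < L - 1" "P (\<sigma> ! i1) x = c" using hone hoeq by auto
    define i0 where "i0 = (LEAST i. i < L - 1 \<and> P (\<sigma> ! i) x = c)"
    have i0: "i0 < L - 1" "P (\<sigma> ! i0) x = c"
      using LeastI[of "\<lambda>i. i < L - 1 \<and> P (\<sigma> ! i) x = c" i1] i1 by (auto simp: i0_def)
    have i0min: "\<And>i. i < i0 \<Longrightarrow> \<not> (i < L - 1 \<and> P (\<sigma> ! i) x = c)"
      unfolding i0_def by (rule not_less_Least)
    show ?thesis
    proof (rule ccontr)
      assume "\<not> ?thesis"
      then have lt: "\<sigma> ! (K - 1) < Min (ho P \<sigma> c)" using lastm by (simp add: \<sigma>_def)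
      have "\<sigma> ! i0 \<in> ho P \<sigma> c" using hoeq i0 by auto
      then have "Min (ho P \<sigma> c) \<le> \<sigma> ! i0" using hofin by simp
      with lt have lt2: "\<sigma> ! (K - 1) < \<sigma> ! i0" by simp
      have Ki0: "K \<le> i0"
      proof (rule ccontr)
        assume "\<not> K \<le> i0"
        then have "i0 \<le> K - 1" by simp
        then consider "i0 = K - 1" | "i0 < K - 1" by linarith
        then show False
        proof cases
          case 1 then show False using lt2 by simp
        next
          case 2
          have "\<sigma> ! i0 < \<sigma> ! (K - 1)"
            using sorted_wrt_nth_less[OF sw, of i0 "K - 1"] 2 K1 by (auto simp: L_def)
          then show False using lt2 by simp
        qed
      qed
      define z where "z = \<sigma> ! i0"
      have zX: "z \<in> X" using sx i0 by (auto simp: z_def L_def)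
      have zx: "z < x"
        using sorted_wrt_nth_less[OF sw, of i0 "L - 1"] i0 lxL by (auto simp: z_def L_def)
      have hz: "hmp X P z = take (Suc i0) \<sigma>"
      proof -
        have "i0 < length \<sigma>" using i0 by (simp add: L_def)
        then have gt: "good X P z (take (Suc i0) \<sigma>)" using good_take[OF g] by (simp add: z_def)
        show ?thesis by (rule good_unique[OF good_hmp[OF assms(2) zX] gt])
      qed
      have hoz: "ho P (take (Suc i0) \<sigma>) c' = (\<lambda>i. \<sigma> ! i) ` {i. i < i0 \<and> P (\<sigma> ! i) x = c'}" for c'
      proof -
        have lt: "last (take (Suc i0) \<sigma>) = \<sigma> ! i0"
          using i0 by (subst last_conv_nth) (auto simp: L_def min_def)
        have lk: "length (take (Suc i0) \<sigma>) = Suc i0" using i0 by (simp add: L_def)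
        have "ho P (take (Suc i0) \<sigma>) c' = {\<sigma> ! i | i. i < i0 \<and> P (\<sigma> ! i) (\<sigma> ! i0) = c'}"
          unfolding ho_def lt lk by (intro Collect_cong ex_cong1) auto
        also have "\<dots> = (\<lambda>i. \<sigma> ! i) ` {i. i < i0 \<and> P (\<sigma> ! i) (\<sigma> ! i0) = c'}"
          by blast
        also have "\<dots> = (\<lambda>i. \<sigma> ! i) ` {i. i < i0 \<and> P (\<sigma> ! i) x = c'}"
          using colour_agree[OF g, of i0] i0 by (auto simp: L_def)
        finally show ?thesis .
      qed
      have sub: "col n P (take (Suc i0) \<sigma>) \<subseteq> col n P \<sigma>"
      proof
        fix c' assume "c' \<in> col n P (take (Suc i0) \<sigma>)"
        then obtain i where "i < i0" "P (\<sigma> ! i) x = c'" "c' < n"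
          by (auto simp: col_def hoz)
        then show "c' \<in> col n P \<sigma>" using i0 hoeq
          by (auto simp: col_def ho_def lx L_def intro!: exI[of _ i])
      qed
      have cnot: "c \<notin> col n P (take (Suc i0) \<sigma>)"
        using i0min i0 by (fastforce simp: col_def hoz)
      have "Q (Suc i0)" unfolding Q_def
        using i0 zX zx hz sub cnot c
        by (auto simp: \<sigma>_def L_def intro!: bexI[of _ z])
      then have "Suc i0 \<le> K" by (rule Kmax)
      then show False using Ki0 by simp
    qed
  qed
  show ?thesis using part1 part2 by blast
qed

end
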